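(* (i) Let $p, m, r \in \mathbb N$. Then \begin{align*} S(p,m,1,r,1) &=\sum_{i=1}^{m}\frac{(-1)^{m-i}}{r^{m-i+1}}S_{p,i}^{+,-}+\frac{(-1)^{m+r}}{r^{m}}S_{p,1}^{+,-} +\frac{(-1)^{m+r-1}}{r^{m}}\overline{\zeta}(p+1)\\ &\quad +\frac{(-1)^{m}}{r^{m}}\left(\sum_{j=1}^{p}(-1)^{p-j+r}\overline{\zeta}(j)\overline{H}_{r-1}^{(p-j+1)} +(-1)^{p+r-1}\overline{\zeta}(1)H_{r-1}^{(p)}\right) +\frac{(-1)^{m+p+r}}{r^{m}}\sum_{n=1}^{r-1}\frac{\overline{H}_{n}}{n^{p}}\,. \end{align*} (ii) Let $m, r \in \mathbb N$, $p \in \mathbb N_{0}$ with $m \geq p+1$. Then \begin{align*} S(-p,m,1,r,1) =\frac{1}{p+1}\sum_{\ell=0}^{p} \binom{p+1}{\ell}B_{\ell}^{+} \left(\sum_{i=1}^{m-p-1+\ell}\frac{(-1)^{m-p-1+\ell-i}}{r^{m-p+\ell-i}}\overline{\zeta}(i) +\frac{(-1)^{m-p-1+\ell+r}}{r^{m-p-1+\ell}}(\overline{\zeta}(1)-\overline{H}_{r})\right)\,. \end{align*}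
   Context: $H_n^{(q)}=\sum_{j=1}^n j^{-q}$ for $q\in\mathbb N$; for an integer $q\ge0$, $H_n^{(-q)}=\sum_{\ell=1}^n\ell^q$. $\overline{H}_n^{(q)}=\sum_{j=1}^n (-1)^{j-1}j^{-q}$, $\overline{H}_n=\overline{H}_n^{(1)}$; these are $0$ for $n=0$. $\overline{\zeta}(s)=\sum_{n\ge1}(-1)^{n-1}n^{-s}$, $\overline{\zeta}(1)=\log 2$. For $q\in\mathbb Z$ and $m,t,r\in\mathbb N$, $S(q,m,t,r,1):=\sum_{n=1}^\infty\frac{(-1)^{n+1}H_n^{(q)}}{n^{m}(n+r)^{t}}$. $S_{p,q}^{+,-}:=\sum_{n=1}^\infty (-1)^{n-1}H_n^{(p)}/n^q$. Bernoulli numbers $B_j^{+}$: $\frac{x}{1-e^{-x}}=\sum_{j\ge0}B_j^{+}\frac{x^j}{j!}$. Empty sums are $0$. *)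

theory Defs
  imports "HOL-Analysis.Analysis" "HOL-Computational_Algebra.Formal_Power_Series"
begin

definition harmq :: "int \<Rightarrow> nat \<Rightarrow> real" where
  "harmq q n = (\<Sum>j=1..n. (real j) powi (-q))"

definition altharm :: "nat \<Rightarrow> nat \<Rightarrow> real" where
  "altharm q n = (\<Sum>j=1..n. (-1) ^ (j - 1) / (real j) ^ q)"

definition altzeta :: "nat \<Rightarrow> real" where
  "altzeta s = (\<Sum>k. (-1) ^ k / (real (k + 1)) ^ s)"

(* S(q,m,t,r,1) = sum_{n>=1} (-1)^{n+1} H_n^{(q)} / (n^m (n+r)^t) *)
definition Ssum :: "int \<Rightarrow> nat \<Rightarrow> nat \<Rightarrow> nat \<Rightarrow> real" where
  "Ssum q m t r = (\<Sum>k. (let n = k + 1 in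
       (-1) ^ (n + 1) * harmq q n / ((real n) ^ m * (real (n + r)) ^ t)))"

definition Spm :: "nat \<Rightarrow> nat \<Rightarrow> real" where
  "Spm p q = (\<Sum>k. (let n = k + 1 in (-1) ^ (n - 1) * harmq (int p) n / (real n) ^ q))"

definition bernoulli_plus :: "nat \<Rightarrow> real" where
  "bernoulli_plus j = fact j * fps_nth (fps_X / (1 - fps_exp (-1)) :: real fps) j"

end

theory Submission
  imports Defs "HOL-Real_Asymp.Real_Asymp"
begin


definition EE :: "real \<Rightarrow> real fps" where "EE c = fps_exp c"

lemma G_eq: "(\<Sum>l=1..n. fps_exp (real l)) * (1 - fps_exp (-1)) = fps_exp (real n) - (1::real fps)"
proof (induction n)
  case 0 then show ?case by simp
next
  case (Suc n)
  have e: "fps_exp (real (Suc n)) * fps_exp (-1) = fps_exp (real n)"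
    by (simp add: fps_exp_add_mult[symmetric])
  have "(\<Sum>l=1..Suc n. fps_exp (real l)) * (1 - fps_exp (-1))
      = (\<Sum>l=1..n. fps_exp (real l)) * (1 - fps_exp (-1)) + fps_exp (real (Suc n)) * (1 - fps_exp (-1))"
    by (simp add: distrib_right)
  also have "\<dots> = fps_exp (real (Suc n)) - 1" using Suc e by (simp add: algebra_simps)
  finally show ?case .
qed

lemma B_eq: "(fps_X / (1 - fps_exp (-1)) :: real fps) * (1 - fps_exp (-1)) = fps_X"
proof (rule fps_times_divide_eq)
  have "fps_nth (1 - fps_exp (-1) :: real fps) 1 \<noteq> 0" by simp
  then show "(1 - fps_exp (-1) :: real fps) \<noteq> 0" by auto
  from subdegree_leI[OF \<open>fps_nth (1 - fps_exp (-1) :: real fps) 1 \<noteq> 0\<close>]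
  show "subdegree (1 - fps_exp (-1) :: real fps) \<le> subdegree (fps_X :: real fps)" by simp
qed

lemma faulhaber:
  "(\<Sum>l=1..n. real l ^ p) = 1 / real (p + 1) * (\<Sum>i=0..p. real ((p + 1) choose i) * bernoulli_plus i * real n ^ (p + 1 - i))"
proof -
  define G :: "real fps" where "G = (\<Sum>l=1..n. fps_exp (real l))"
  define D :: "real fps" where "D = Abs_fps (\<lambda>k. real n ^ (k+1) / fact (k+1))"
  define B :: "real fps" where "B = fps_X / (1 - fps_exp (-1))"
  have XD: "fps_X * D = fps_exp (real n) - 1"
  proof (rule fps_ext)
    fix k show "fps_nth (fps_X * D) k = fps_nth (fps_exp (real n) - 1) k"
      by (cases k) (auto simp: D_def fact_Suc algebra_simps)
  qed
  have nz: "(1 - fps_exp (-1) :: real fps) \<noteq> 0"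
  proof -
    have "fps_nth (1 - fps_exp (-1) :: real fps) 1 \<noteq> 0" by simp
    then show ?thesis by auto
  qed
  have "G * (1 - fps_exp (-1)) = (B * D) * (1 - fps_exp (-1))"
    using G_eq[of n] B_eq XD unfolding G_def B_def by (metis mult.assoc mult.commute)
  then have GBD: "G = B * D" using nz by simp
  have "fps_nth G p = (\<Sum>l=1..n. real l ^ p) / fact p"
    unfolding G_def by (simp add: fps_sum_nth sum_divide_distrib)
  moreover have "fps_nth (B * D) p = (\<Sum>i=0..p. bernoulli_plus i / fact i * (real n ^ (p - i + 1) / fact (p - i + 1)))"
    by (simp add: fps_mult_nth B_def D_def bernoulli_plus_def)
  ultimately have "(\<Sum>l=1..n. real l ^ p) = fact p * (\<Sum>i=0..p. bernoulli_plus i / fact i * (real n ^ (p - i + 1) / fact (p - i + 1)))"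
    using GBD by (simp add: field_simps)
  also have "\<dots> = 1 / real (p + 1) * (\<Sum>i=0..p. real ((p + 1) choose i) * bernoulli_plus i * real n ^ (p + 1 - i))"
    unfolding sum_distrib_left
  proof (rule sum.cong)
    fix i assume i: "i \<in> {0..p}"
    then have i1: "p + 1 - i = p - i + 1" by auto
    have c: "real ((p + 1) choose i) = fact (p+1) / (fact i * fact (p + 1 - i))"
      using i by (intro binomial_fact) auto
    show "fact p * (bernoulli_plus i / fact i * (real n ^ (p - i + 1) / fact (p - i + 1))) =
         1 / real (p + 1) * (real (p + 1 choose i) * bernoulli_plus i * real n ^ (p + 1 - i))"
    proof -
      have f1: "fact (p+1) = real (p+1) * fact p" by (simp add: fact_Suc)
      have f2: "fact (p - i + 1) = real (p - i + 1) * fact (p - i)" by (simp add: fact_Suc)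
      have pos: "fact i > (0::real)" "fact (p - i) > (0::real)" "real (p - i + 1) > 0" "real (p+1) > 0" by auto
      have gen: "\<And>P a b c d e q :: real. P > 0 \<Longrightarrow> c \<noteq> 0 \<Longrightarrow> e \<noteq> 0 \<Longrightarrow> q \<noteq> 0 \<Longrightarrow>
          a * (b / c * (d / (q * e))) = 1 / P * ((P * a) / (c * (q * e)) * b * d)"
        by (simp add: field_simps)
      show ?thesis unfolding c i1 f1 f2 using pos by (intro gen) auto
    qed
  qed simp
  finally show ?thesis .
qed



lemma sum_shift1: "(\<Sum>j=1..r. g j) = (\<Sum>i<r. g (Suc i))"
  by (induction r) auto

lemma pf_gen:
  fixes c :: "nat \<Rightarrow> real" and s :: real
  assumes s: "s > 0"
    and A: "\<And>j. j \<ge> 1 \<Longrightarrow> summable (\<lambda>k. c k / real (Suc k) ^ j)"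
    and Bs: "summable (\<lambda>k. c k / (real (Suc k) + s))"
  shows "summable (\<lambda>k. c k / (real (Suc k) ^ m * (real (Suc k) + s))) \<and>
    (\<Sum>k. c k / (real (Suc k) ^ m * (real (Suc k) + s))) =
     (\<Sum>i=1..m. (-1) ^ (m - i) / s ^ (m - i + 1) * (\<Sum>k. c k / real (Suc k) ^ i))
     + (-1) ^ m / s ^ m * (\<Sum>k. c k / (real (Suc k) + s))"
proof (induction m)
  case 0
  then show ?case using Bs by simp
next
  case (Suc m)
  define A where "A i = (\<Sum>k. c k / real (Suc k) ^ i)" for i
  define B where "B = (\<Sum>k. c k / (real (Suc k) + s))"
  have eq: "c k / (real (Suc k) ^ Suc m * (real (Suc k) + s)) =
      (1/s) * (c k / real (Suc k) ^ Suc m) - (1/s) * (c k / (real (Suc k) ^ m * (real (Suc k) + s)))" for k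
  proof -
    have gen: "\<And>x P. x > 0 \<Longrightarrow> P > 0 \<Longrightarrow> c k / ((x * P) * (x + s)) = (1/s) * (c k / (x * P)) - (1/s) * (c k / (P * (x + s)))"
    proof -
      fix x P :: real assume "x > 0" "P > 0"
      then have "x + s \<noteq> 0" "x \<noteq> 0" "P \<noteq> 0" "s \<noteq> 0" using s by auto
      then show "c k / ((x * P) * (x + s)) = (1/s) * (c k / (x * P)) - (1/s) * (c k / (P * (x + s)))"
        by (simp add: divide_simps add.commute) (simp add: algebra_simps)
    qed
    show ?thesis unfolding power_Suc by (rule gen) auto
  qed
  have s1: "summable (\<lambda>k. c k / real (Suc k) ^ Suc m)" using A[of "Suc m"] by simp
  have s2: "summable (\<lambda>k. c k / (real (Suc k) ^ m * (real (Suc k) + s)))" using Suc by blast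
  have summ: "summable (\<lambda>k. c k / (real (Suc k) ^ Suc m * (real (Suc k) + s)))"
    unfolding eq by (intro summable_diff summable_mult s1 s2)
  have "(\<Sum>k. c k / (real (Suc k) ^ Suc m * (real (Suc k) + s)))
      = (1/s) * A (Suc m) - (1/s) * (\<Sum>k. c k / (real (Suc k) ^ m * (real (Suc k) + s)))"
    unfolding eq A_def
    using suminf_diff[OF summable_mult[OF s1, of "1/s"] summable_mult[OF s2, of "1/s"]]
      suminf_mult[OF s1, of "1/s"] suminf_mult[OF s2, of "1/s"] by simp
  also have "\<dots> = (1/s) * A (Suc m) - (1/s) * ((\<Sum>i=1..m. (-1) ^ (m - i) / s ^ (m - i + 1) * A i)
     + (-1) ^ m / s ^ m * B)"
    using Suc unfolding A_def B_def by simp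
  also have "\<dots> = (\<Sum>i=1..Suc m. (-1) ^ (Suc m - i) / s ^ (Suc m - i + 1) * A i)
     + (-1) ^ Suc m / s ^ Suc m * B"
  proof -
    have "(\<Sum>i=1..m. (-1) ^ (Suc m - i) / s ^ (Suc m - i + 1) * A i)
        = - (1/s) * (\<Sum>i=1..m. (-1) ^ (m - i) / s ^ (m - i + 1) * A i)"
      unfolding sum_distrib_left
    proof (rule sum.cong)
      fix i assume "i \<in> {1..m}"
      then have "Suc m - i = Suc (m - i)" by auto
      then show "(-1) ^ (Suc m - i) / s ^ (Suc m - i + 1) * A i = - (1/s) * ((-1) ^ (m - i) / s ^ (m - i + 1) * A i)"
        using s by (simp add: field_simps)
    qed simp
    then show ?thesis using s by (simp add: field_simps)
  qed
  finally show ?case using summ unfolding A_def B_def by blast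
qed

lemma leib: "(a \<longlonglongrightarrow> 0) \<Longrightarrow> (\<And>n. 0 \<le> a n) \<Longrightarrow> (\<And>n. a (Suc n) \<le> a n) \<Longrightarrow>
   summable (\<lambda>n. (-1::real)^n * a n)"
  by (rule summable_Leibniz'(1))

lemma to0: assumes "\<And>k. 0 \<le> a k" "\<And>k. a k \<le> 1 / real (Suc k)" shows "a \<longlonglongrightarrow> (0::real)"
proof (rule tendsto_sandwich[of "\<lambda>_. 0" _ _ "\<lambda>k. 1 / real (Suc k)"])
  show "(\<lambda>k. 1 / real (Suc k)) \<longlonglongrightarrow> 0" using LIMSEQ_inverse_real_of_nat by (simp add: inverse_eq_divide)
qed (use assms in auto)

lemma sum_az: assumes "j \<ge> 1" shows "summable (\<lambda>k. (-1::real)^k / real (Suc k) ^ j)"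
proof -
  have "summable (\<lambda>k. (-1::real)^k * (1 / real (Suc k) ^ j))"
  proof (rule leib)
    show "(\<lambda>k. 1 / real (Suc k) ^ j) \<longlonglongrightarrow> 0"
    proof (rule to0)
      fix k
      have "real (Suc k) ^ 1 \<le> real (Suc k) ^ j" using assms by (intro power_increasing) auto
      then show "1 / real (Suc k) ^ j \<le> 1 / real (Suc k)" by (intro divide_left_mono) auto
    qed simp
    show "1 / real (Suc (Suc n)) ^ j \<le> 1 / real (Suc n) ^ j" for n
      by (intro divide_left_mono power_mono) auto
  qed simp
  then show ?thesis by simp
qed

lemma sum_V: assumes "s \<ge> 0" shows "summable (\<lambda>k. (-1::real)^k / (real (Suc k) + s))"
proof -
  have "summable (\<lambda>k. (-1::real)^k * (1 / (real (Suc k) + s)))"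
  proof (rule leib)
    show "(\<lambda>k. 1 / (real (Suc k) + s)) \<longlonglongrightarrow> 0"
      by (rule to0) (use assms in \<open>auto intro!: divide_left_mono\<close>)
    show "1 / (real (Suc (Suc n)) + s) \<le> 1 / (real (Suc n) + s)" for n
      using assms by (intro divide_left_mono) auto
  qed (use assms in auto)
  then show ?thesis by simp
qed

lemma V_val: "(\<Sum>k. (-1::real)^k / (real (Suc k) + real r)) = (-1)^r * (altzeta 1 - altharm 1 r)"
proof -
  define f where "f k = (-1::real)^k / real (Suc k)" for k
  have "summable f" using sum_az[of 1] unfolding f_def by simp
  moreover have "altzeta 1 = suminf f" unfolding altzeta_def f_def by simp
  ultimately have "f sums altzeta 1" by (simp add: summable_sums)
  then have "(\<lambda>i. f (i + r)) sums (altzeta 1 - (\<Sum>i<r. f i))"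
    using sums_iff_shift[of f r "altzeta 1 - (\<Sum>i<r. f i)"] by simp
  moreover have "(\<Sum>i<r. f i) = altharm 1 r" unfolding altharm_def sum_shift1 f_def by simp
  ultimately have "(\<lambda>i. f (i + r)) sums (altzeta 1 - altharm 1 r)" by simp
  then have "(\<lambda>i. (-1)^r * f (i + r)) sums ((-1)^r * (altzeta 1 - altharm 1 r))" by (rule sums_mult)
  moreover have "(-1)^r * f (i + r) = (-1::real)^i / (real (Suc i) + real r)" for i
    unfolding f_def by (simp add: power_add field_simps)
  ultimately show ?thesis by (simp add: sums_iff)
qed




lemma az_eq: "altzeta i = (\<Sum>k. (-1::real)^k / real (Suc k) ^ i)"
  by (simp add: altzeta_def)

lemma U_val:
  assumes r: "r \<ge> 1"
  shows "summable (\<lambda>k. (-1::real)^k / (real (Suc k) ^ q * (real (Suc k) + real r))) \<and>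
    (\<Sum>k. (-1::real)^k / (real (Suc k) ^ q * (real (Suc k) + real r))) =
     (\<Sum>i=1..q. (-1) ^ (q - i) / real r ^ (q - i + 1) * altzeta i)
     + (-1) ^ (q + r) / real r ^ q * (altzeta 1 - altharm 1 r)"
proof -
  have "summable (\<lambda>k. (-1::real)^k / (real (Suc k) ^ q * (real (Suc k) + real r))) \<and>
    (\<Sum>k. (-1::real)^k / (real (Suc k) ^ q * (real (Suc k) + real r))) =
     (\<Sum>i=1..q. (-1) ^ (q - i) / real r ^ (q - i + 1) * (\<Sum>k. (-1::real)^k / real (Suc k) ^ i))
     + (-1) ^ q / real r ^ q * (\<Sum>k. (-1::real)^k / (real (Suc k) + real r))"
    by (rule pf_gen[OF _ sum_az sum_V]) (use r in auto)
  then show ?thesis unfolding V_val az_eq[symmetric] by (simp add: power_add)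
qed

lemma harmq_neg: "harmq (- int p) n = (\<Sum>j=1..n. real j ^ p)"
  by (simp add: harmq_def)

lemma part2:
  assumes "m \<ge> 1" "r \<ge> 1" "m \<ge> p + 1"
  shows "Ssum (- int p) m 1 r =
        1 / real (p + 1) * (\<Sum>l=0..p. real ((p + 1) choose l) * bernoulli_plus l *
          ((\<Sum>i=1..m - p - 1 + l.
               (-1) ^ (m - p - 1 + l - i) / (real r) ^ (m - p + l - i) * altzeta i)
           + (-1) ^ (m - p - 1 + l + r) / (real r) ^ (m - p - 1 + l) * (altzeta 1 - altharm 1 r)))"
proof -
  define C where "C l = real ((p + 1) choose l) * bernoulli_plus l" for l
  define f where "f l k = (-1::real)^k / (real (Suc k) ^ (m - p - 1 + l) * (real (Suc k) + real r))" for l k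
  have trm: "(let n = k + 1 in (-1) ^ (n + 1) * harmq (- int p) n / ((real n) ^ m * (real (n + r)) ^ 1))
     = 1 / real (p + 1) * (\<Sum>l=0..p. C l * f l k)" for k
  proof -
    have "(let n = k + 1 in (-1) ^ (n + 1) * harmq (- int p) n / ((real n) ^ m * (real (n + r)) ^ 1))
       = (-1)^k * (\<Sum>j=1..Suc k. real j ^ p) / (real (Suc k) ^ m * (real (Suc k) + real r))"
      by (simp add: harmq_neg)
    also have "\<dots> = (-1)^k * (1 / real (p + 1) * (\<Sum>l=0..p. C l * real (Suc k) ^ (p + 1 - l)))
        / (real (Suc k) ^ m * (real (Suc k) + real r))"
      unfolding faulhaber C_def by simp
    also have "\<dots> = 1 / real (p + 1) * (\<Sum>l=0..p. C l * f l k)"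
      unfolding sum_distrib_left sum_divide_distrib
    proof (rule sum.cong)
      fix l assume l: "l \<in> {0..p}"
      have me: "real (Suc k) ^ m = real (Suc k) ^ (p + 1 - l) * real (Suc k) ^ (m - p - 1 + l)"
        unfolding power_add[symmetric] using l assms by (intro arg_cong[where f="\<lambda>e. real (Suc k) ^ e"]) auto
      have pos: "real (Suc k) ^ (p + 1 - l) > 0" "real (Suc k) ^ (m - p - 1 + l) > 0" "real (Suc k) + real r > 0"
        by auto
      show "(-1)^k * (1 / real (p + 1) * (C l * real (Suc k) ^ (p + 1 - l))) /
            (real (Suc k) ^ m * (real (Suc k) + real r)) = 1 / real (p + 1) * (C l * f l k)"
      proof -
        have gen: "\<And>(a::real) b d e P c. a > 0 \<Longrightarrow> b > 0 \<Longrightarrow> d > 0 \<Longrightarrow>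
           e * (1 / P * (c * a)) / (a * b * d) = 1 / P * (c * (e / (b * d)))"
          by (simp add: field_simps)
        show ?thesis unfolding me f_def using pos by (intro gen) auto
      qed
    qed simp
    finally show ?thesis .
  qed
  have summ: "summable (f l)" for l unfolding f_def using U_val assms(2) by blast
  have "Ssum (- int p) m 1 r = (\<Sum>k. 1 / real (p + 1) * (\<Sum>l=0..p. C l * f l k))"
    unfolding Ssum_def trm ..
  also have "\<dots> = 1 / real (p + 1) * (\<Sum>l=0..p. C l * suminf (f l))"
  proof -
    have s2: "summable (\<lambda>k. \<Sum>l=0..p. C l * f l k)" using summ by (intro summable_sum summable_mult)
    have "(\<Sum>k. \<Sum>l=0..p. C l * f l k) = (\<Sum>l=0..p. \<Sum>k. C l * f l k)"
      using summ by (intro suminf_sum summable_mult)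
    also have "\<dots> = (\<Sum>l=0..p. C l * suminf (f l))" using summ by (simp add: suminf_mult)
    finally show ?thesis using suminf_mult[OF s2, of "1 / real (p+1)"] by simp
  qed
  also have "\<dots> = 1 / real (p + 1) * (\<Sum>l=0..p. C l *
          ((\<Sum>i=1..m - p - 1 + l.
               (-1) ^ (m - p - 1 + l - i) / (real r) ^ (m - p + l - i) * altzeta i)
           + (-1) ^ (m - p - 1 + l + r) / (real r) ^ (m - p - 1 + l) * (altzeta 1 - altharm 1 r)))"
  proof (intro arg_cong[where f="\<lambda>x. 1 / real (p + 1) * x"] sum.cong refl)
    fix l assume l: "l \<in> {0..p}"
    have "(\<Sum>i=1..m - p - 1 + l. (-1) ^ (m - p - 1 + l - i) / (real r) ^ (m - p + l - i) * altzeta i)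
        = (\<Sum>i=1..m - p - 1 + l. (-1) ^ (m - p - 1 + l - i) / (real r) ^ (m - p - 1 + l - i + 1) * altzeta i)"
    proof (rule sum.cong)
      fix i assume "i \<in> {1..m - p - 1 + l}"
      then have e: "m - p + l - i = m - p - 1 + l - i + 1" using assms by auto
      then show "(-1) ^ (m - p - 1 + l - i) / (real r) ^ (m - p + l - i) * altzeta i
         = (-1) ^ (m - p - 1 + l - i) / (real r) ^ (m - p - 1 + l - i + 1) * altzeta i" unfolding e by simp
    qed simp
    then show "C l * suminf (f l) = C l *
          ((\<Sum>i=1..m - p - 1 + l.
               (-1) ^ (m - p - 1 + l - i) / (real r) ^ (m - p + l - i) * altzeta i)
           + (-1) ^ (m - p - 1 + l + r) / (real r) ^ (m - p - 1 + l) * (altzeta 1 - altharm 1 r))"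
      unfolding f_def using U_val[OF assms(2), of "m - p - 1 + l"] by simp
  qed
  finally show ?thesis unfolding C_def by simp
qed




lemma harmq_pos: "harmq (int p) n = (\<Sum>j=1..n. 1 / real j ^ p)"
  by (simp add: harmq_def power_int_minus inverse_eq_divide)

lemma H_Suc: "harmq (int p) (Suc n) = harmq (int p) n + 1 / real (Suc n) ^ p"
  by (simp add: harmq_pos)

lemma H_nonneg: "harmq (int p) n \<ge> 0"
  unfolding harmq_pos by (intro sum_nonneg) auto

lemma H_ge1: "harmq (int p) (Suc n) \<ge> 1"
proof (induction n)
  case 0 then show ?case by (simp add: harmq_pos)
next
  case (Suc n) then show ?case by (subst H_Suc) (simp add: add_increasing2)
qed

lemma H_le_harm: assumes "p \<ge> 1" shows "harmq (int p) n \<le> (harm n :: real)"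
  unfolding harmq_pos harm_def
proof (rule sum_mono)
  fix j assume "j \<in> {1..n}"
  then have "real j ^ 1 \<le> real j ^ p" using assms by (intro power_increasing) auto
  then show "1 / real j ^ p \<le> inverse (real j)" using \<open>j \<in> {1..n}\<close>
    by (simp add: inverse_eq_divide divide_left_mono)
qed

lemma harm_le_ln: "harm (Suc n) \<le> 1 + ln (real (Suc n))"
proof -
  have "harm (Suc n) - ln (real (Suc n)) \<le> harm (Suc 0) - ln (real (Suc 0))"
    using decseqD[OF decseq_harm_diff_ln, of 0 n] by simp
  then show ?thesis by (simp add: harm_def)
qed

lemma Spm_summable:
  assumes p: "p \<ge> 1" and i: "i \<ge> 1"
  shows "summable (\<lambda>k. (-1::real)^k * harmq (int p) (Suc k) / real (Suc k) ^ i)"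
proof -
  define a where "a k = harmq (int p) (Suc k) / real (Suc k) * (1 / real (Suc k) ^ (i - 1))" for k
  have aeq: "a k = harmq (int p) (Suc k) / real (Suc k) ^ i" for k
  proof -
    have "real (Suc k) ^ i = real (Suc k) * real (Suc k) ^ (i - 1)"
      using i by (metis Suc_diff_le diff_Suc_1 diff_le_self le_add_diff_inverse2 power_Suc plus_1_eq_Suc)
    then show ?thesis unfolding a_def by simp
  qed
  have "summable (\<lambda>k. (-1::real)^k * a k)"
  proof (rule leib)
    show "0 \<le> a n" for n unfolding a_def using H_nonneg by simp
    show "a (Suc n) \<le> a n" for n
      unfolding a_def
    proof (rule mult_mono)
      define h where "h = harmq (int p) (Suc n)"
      have h1: "h \<ge> 1" unfolding h_def by (rule H_ge1)
      define e where "e = 1 / real (Suc (Suc n)) ^ p"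
      have "real (Suc (Suc n)) ^ 1 \<le> real (Suc (Suc n)) ^ p" using p by (intro power_increasing) auto
      then have e1: "e \<le> 1 / real (Suc (Suc n))" unfolding e_def by (intro divide_left_mono) auto
      have e0: "e \<ge> 0" unfolding e_def by simp
      have "e * real (Suc n) \<le> real (Suc n) / real (Suc (Suc n))"
        using e1 by (simp add: divide_simps mult_right_mono)
      also have "\<dots> \<le> 1" by simp
      finally have key: "e * real (Suc n) \<le> h" using h1 by linarith
      have "(h + e) / real (Suc (Suc n)) \<le> h / real (Suc n)"
        using key by (simp add: divide_simps algebra_simps)
      then show "harmq (int p) (Suc (Suc n)) / real (Suc (Suc n)) \<le> harmq (int p) (Suc n) / real (Suc n)"
        unfolding h_def e_def by (subst H_Suc) simp
      show "1 / real (Suc (Suc n)) ^ (i - 1) \<le> 1 / real (Suc n) ^ (i - 1)"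
        by (intro divide_left_mono power_mono) auto
      show "0 \<le> harmq (int p) (Suc n) / real (Suc n)" using H_nonneg by simp
      show "0 \<le> 1 / real (Suc (Suc n)) ^ (i - 1)" by simp
    qed
    show "a \<longlonglongrightarrow> 0"
    proof (rule tendsto_sandwich[of "\<lambda>_. 0" _ _ "\<lambda>k. (1 + ln (real (Suc k))) / real (Suc k)"])
      show "(\<lambda>k. (1 + ln (real (Suc k))) / real (Suc k)) \<longlonglongrightarrow> 0" by real_asymp
      show "\<forall>\<^sub>F n in sequentially. 0 \<le> a n" unfolding a_def using H_nonneg by simp
      show "\<forall>\<^sub>F n in sequentially. a n \<le> (1 + ln (real (Suc n))) / real (Suc n)"
      proof (rule always_eventually, rule allI)
        fix k
        have "a k \<le> harmq (int p) (Suc k) / real (Suc k) * 1"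
          unfolding a_def using H_nonneg by (intro mult_left_mono) auto
        also have "\<dots> \<le> (1 + ln (real (Suc k))) / real (Suc k)"
          using H_le_harm[OF p, of "Suc k"] harm_le_ln[of k] by (simp add: divide_right_mono)
        finally show "a k \<le> (1 + ln (real (Suc k))) / real (Suc k)" .
      qed
    qed simp
  qed
  then show ?thesis unfolding aeq by simp
qed




context
  fixes p :: nat
  assumes p: "p \<ge> 1"
begin

definition tt :: "nat \<Rightarrow> nat \<Rightarrow> real" where
  "tt r k = (-1)^k * harmq (int p) (Suc k) / (real (Suc k) + real r)"
definition uu :: "nat \<Rightarrow> nat \<Rightarrow> real" where
  "uu r k = (-1)^k / (real (Suc k) ^ p * (real (Suc k) + real r))"

lemma uu_summable: "summable (uu s)"
proof (cases "s = 0")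
  case True
  have "uu s = (\<lambda>k. (-1)^k / real (Suc k) ^ Suc p)" unfolding uu_def True by (simp add: mult.commute)
  then show ?thesis using sum_az[of "Suc p"] by simp
next
  case False
  then show ?thesis unfolding uu_def using U_val[of s p] by auto
qed

lemma uu0: "suminf (uu 0) = altzeta (p + 1)"
proof -
  have "uu 0 = (\<lambda>k. (-1)^k / real (Suc k) ^ Suc p)" unfolding uu_def by (simp add: mult.commute)
  then show ?thesis by (simp add: az_eq)
qed

lemma uuS: "suminf (uu (Suc r)) = (\<Sum>i=1..p. (-1) ^ (p - i) / real (Suc r) ^ (p - i + 1) * altzeta i)
     + (-1) ^ (p + Suc r) / real (Suc r) ^ p * (altzeta 1 - altharm 1 (Suc r))"
  unfolding uu_def using U_val[of "Suc r" p] by auto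

lemma tt_rec: "tt (Suc r) k = - tt r (Suc k) + uu r (Suc k)"
proof -
  have d: "real (Suc k) + real (Suc r) = real (Suc (Suc k)) + real r" by simp
  have pos: "real (Suc (Suc k)) + real r > 0" "real (Suc (Suc k)) ^ p > 0" by auto
  have gen: "\<And>(sg::real) h q D. q > 0 \<Longrightarrow> D > 0 \<Longrightarrow> sg * h / D = - ((- 1) * sg * (h + 1 / q) / D) + (- 1) * sg / (q * D)"
    by (simp add: field_simps)
  show ?thesis unfolding tt_def uu_def d H_Suc[of p "Suc k"] power_Suc[of "-1::real" k] using pos
    by (intro gen) auto
qed

lemma tt_summable: "summable (tt r)"
proof (induction r)
  case 0
  have "tt 0 k = (-1)^k * harmq (int p) (Suc k) / real (Suc k) ^ 1" for k unfolding tt_def by simp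
  then show ?case using Spm_summable[OF p, of 1] by simp
next
  case (Suc r)
  have "summable (\<lambda>k. - tt r (Suc k) + uu r (Suc k))"
    using Suc uu_summable[of r] by (intro summable_add summable_minus) (auto simp: summable_Suc_iff)
  then show ?case unfolding tt_rec[symmetric] by simp
qed

lemma T_rec: "suminf (tt (Suc r)) = - suminf (tt r) + suminf (uu r)"
proof -
  have "suminf (tt (Suc r)) = (\<Sum>k. - tt r (Suc k) + uu r (Suc k))" unfolding tt_rec ..
  also have "\<dots> = - (\<Sum>k. tt r (Suc k)) + (\<Sum>k. uu r (Suc k))"
    using tt_summable[of r] uu_summable[of r]
    by (subst suminf_add[symmetric]) (auto simp: summable_Suc_iff suminf_minus summable_minus)
  also have "\<dots> = - (suminf (tt r) - tt r 0) + (suminf (uu r) - uu r 0)"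
    using tt_summable[of r] uu_summable[of r] by (simp add: suminf_split_head)
  also have "tt r 0 = uu r 0" unfolding tt_def uu_def by (simp add: harmq_pos)
  finally show ?thesis by simp
qed

lemma Spm_eq: "Spm p i = (\<Sum>k. (-1::real)^k * harmq (int p) (Suc k) / real (Suc k) ^ i)"
  unfolding Spm_def by simp

lemma T0: "suminf (tt 0) = Spm p 1"
  unfolding Spm_eq tt_def by simp

lemma sq1: "(-1::real)^r * (-1)^r = 1"
  by (induction r) auto

lemma altharm_Suc: "altharm q (Suc n) = altharm q n + (-1)^n / real (Suc n) ^ q"
  by (simp add: altharm_def)

definition FF :: "nat \<Rightarrow> real" where
  "FF r = (-1)^(Suc r) * Spm p 1 + (-1)^r * altzeta (p+1)
     + (\<Sum>j=1..p. (-1)^(p-j+Suc r) * altzeta j * altharm (p-j+1) r)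
     + (-1)^(p+r) * altzeta 1 * harmq (int p) r
     + (-1)^(p+Suc r) * (\<Sum>n=1..r. altharm 1 n / real n ^ p)"

lemma T_closed: "suminf (tt (Suc r)) = FF r"
proof (induction r)
  case 0
  show ?case unfolding T_rec T0 uu0 FF_def by (simp add: altharm_def harmq_pos)
next
  case (Suc r)
  define s where "s = real (Suc r)"
  have hj: "(\<Sum>j=1..p. (-1)^(p-j+Suc (Suc r)) * altzeta j * altharm (p-j+1) (Suc r))
     = - (\<Sum>j=1..p. (-1)^(p-j+Suc r) * altzeta j * altharm (p-j+1) r)
       + (\<Sum>j=1..p. (-1) ^ (p - j) / s ^ (p - j + 1) * altzeta j)"
    unfolding sum_negf[symmetric] sum.distrib[symmetric]
  proof (rule sum.cong)
    fix j assume "j \<in> {1..p}"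
    have e: "(-1::real)^(p-j+Suc (Suc r)) = (-1)^(p-j) * (-1)^r" "(-1::real)^(p-j+Suc r) = - ((-1)^(p-j) * (-1)^r)"
      by (simp_all add: power_add)
    have "(-1::real)^(p-j) * (-1)^r * altzeta j * ((-1)^r / s ^ (p - j + 1))
        = (-1)^(p-j) * ((-1)^r * (-1)^r) * altzeta j / s ^ (p - j + 1)" by simp
    also have "\<dots> = (-1)^(p-j) * altzeta j / s ^ (p - j + 1)" unfolding sq1 by simp
    finally have x: "(-1::real)^(p-j) * (-1)^r * altzeta j * ((-1)^r / s ^ (p - j + 1))
        = (-1)^(p-j) * altzeta j / s ^ (p - j + 1)" .
    show "(-1)^(p-j+Suc (Suc r)) * altzeta j * altharm (p-j+1) (Suc r) =
      - ((-1)^(p-j+Suc r) * altzeta j * altharm (p-j+1) r) + (-1) ^ (p - j) / s ^ (p - j + 1) * altzeta j"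
      unfolding e altharm_Suc s_def[symmetric] using x by (simp add: algebra_simps)
  qed simp
  have "suminf (tt (Suc (Suc r))) = - FF r + suminf (uu (Suc r))" using T_rec[of "Suc r"] Suc by simp
  also have "\<dots> = FF (Suc r)"
    unfolding uuS FF_def hj s_def[symmetric] H_Suc[of p r]
    by (simp add: power_add algebra_simps s_def diff_divide_distrib add_divide_distrib)
  finally show ?case .
qed

end



lemma part1:
  assumes p: "p \<ge> 1" and m: "m \<ge> 1" and r: "r \<ge> 1"
  shows "Ssum (int p) m 1 r =
        (\<Sum>i=1..m. (-1) ^ (m - i) / (real r) ^ (m - i + 1) * Spm p i)
        + (-1) ^ (m + r) / (real r) ^ m * Spm p 1
        + (-1) ^ (m + r - 1) / (real r) ^ m * altzeta (p + 1)
        + (-1) ^ m / (real r) ^ m *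
            ((\<Sum>j=1..p. (-1) ^ (p - j + r) * altzeta j * altharm (p - j + 1) (r - 1))
             + (-1) ^ (p + r - 1) * altzeta 1 * harmq (int p) (r - 1))
        + (-1) ^ (m + p + r) / (real r) ^ m * (\<Sum>n=1..r-1. altharm 1 n / (real n) ^ p)"
proof -
  obtain r' where r': "r = Suc r'" using r by (cases r) auto
  have ttf: "tt p r = (\<lambda>k. (-1::real)^k * harmq (int p) (Suc k) / (real (Suc k) + real r))"
    by (rule ext) (simp add: tt_def[OF p])
  define c where "c k = (-1::real)^k * harmq (int p) (Suc k)" for k
  have "summable (\<lambda>k. c k / (real (Suc k) ^ m * (real (Suc k) + real r))) \<and>
    (\<Sum>k. c k / (real (Suc k) ^ m * (real (Suc k) + real r))) =
     (\<Sum>i=1..m. (-1) ^ (m - i) / real r ^ (m - i + 1) * (\<Sum>k. c k / real (Suc k) ^ i))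
     + (-1) ^ m / real r ^ m * (\<Sum>k. c k / (real (Suc k) + real r))"
  proof (rule pf_gen)
    show "0 < real r" using r by simp
    show "summable (\<lambda>k. c k / real (Suc k) ^ j)" if "1 \<le> j" for j
      unfolding c_def using Spm_summable[OF p that] .
    show "summable (\<lambda>k. c k / (real (Suc k) + real r))"
      using tt_summable[OF p, of r] unfolding c_def ttf .
  qed
  then have main: "(\<Sum>k. c k / (real (Suc k) ^ m * (real (Suc k) + real r))) =
     (\<Sum>i=1..m. (-1) ^ (m - i) / real r ^ (m - i + 1) * Spm p i)
     + (-1) ^ m / real r ^ m * FF p r'"
    using T_closed[OF p, of r'] unfolding c_def Spm_eq[OF p, symmetric] ttf[unfolded r'] r' by simp
  have "Ssum (int p) m 1 r = (\<Sum>k. c k / (real (Suc k) ^ m * (real (Suc k) + real r)))"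
    unfolding Ssum_def c_def by simp
  also have "\<dots> = (\<Sum>i=1..m. (-1) ^ (m - i) / real r ^ (m - i + 1) * Spm p i)
     + (-1) ^ m / real r ^ m * FF p r'" by (rule main)
  also have "\<dots> = (\<Sum>i=1..m. (-1) ^ (m - i) / (real r) ^ (m - i + 1) * Spm p i)
        + (-1) ^ (m + r) / (real r) ^ m * Spm p 1
        + (-1) ^ (m + r - 1) / (real r) ^ m * altzeta (p + 1)
        + (-1) ^ m / (real r) ^ m *
            ((\<Sum>j=1..p. (-1) ^ (p - j + r) * altzeta j * altharm (p - j + 1) (r - 1))
             + (-1) ^ (p + r - 1) * altzeta 1 * harmq (int p) (r - 1))
        + (-1) ^ (m + p + r) / (real r) ^ m * (\<Sum>n=1..r-1. altharm 1 n / (real n) ^ p)"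
    unfolding FF_def[OF p] r' by (simp add: power_add algebra_simps add_divide_distrib diff_divide_distrib)
  finally show ?thesis .
qed



theorem lemma4:
  shows
  "(\<forall>p m r :: nat. p \<ge> 1 \<and> m \<ge> 1 \<and> r \<ge> 1 \<longrightarrow>
      Ssum (int p) m 1 r =
        (\<Sum>i=1..m. (-1) ^ (m - i) / (real r) ^ (m - i + 1) * Spm p i)
        + (-1) ^ (m + r) / (real r) ^ m * Spm p 1
        + (-1) ^ (m + r - 1) / (real r) ^ m * altzeta (p + 1)
        + (-1) ^ m / (real r) ^ m *
            ((\<Sum>j=1..p. (-1) ^ (p - j + r) * altzeta j * altharm (p - j + 1) (r - 1))
             + (-1) ^ (p + r - 1) * altzeta 1 * harmq (int p) (r - 1))
        + (-1) ^ (m + p + r) / (real r) ^ m * (\<Sum>n=1..r-1. altharm 1 n / (real n) ^ p))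
   \<and>
   (\<forall>p m r :: nat. m \<ge> 1 \<and> r \<ge> 1 \<and> m \<ge> p + 1 \<longrightarrow>
      Ssum (- int p) m 1 r =
        1 / real (p + 1) * (\<Sum>l=0..p. real ((p + 1) choose l) * bernoulli_plus l *
          ((\<Sum>i=1..m - p - 1 + l.
               (-1) ^ (m - p - 1 + l - i) / (real r) ^ (m - p + l - i) * altzeta i)
           + (-1) ^ (m - p - 1 + l + r) / (real r) ^ (m - p - 1 + l) * (altzeta 1 - altharm 1 r))))"
    using part1 part2 by blast

end
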